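(* Let $a\ge2$, let $t\ge3$ be odd, and let $F=\breve F(a^t)$, where $a^t$ is the $t$-tuple $(a,\dots,a)$, with $n=\#F$. Then \[ \hat\chi\equiv\frac n2+a\Big(\sum_{p\text{ peak}}\chi_p-\sum_{v\text{ valley}}\chi_v\Big), \] where $\hat\chi=\sum_{q\in F}\hat\chi_q$ is the order ideal cardinality statistic.
   Context: A fence $\breve F(\alpha_1,\dots,\alpha_t)$ ($t\ge2$, positive integers, $\alpha_1,\alpha_t\ge2$) is the poset on $\{x_1,\dots,x_n\}$, $n=\alpha_1+\dots+\alpha_t-1$, with $a_i=\alpha_1+\dots+\alpha_i$, $a_0=0$, whose cover relations are: for $1\le j\le n-1$ with $a_{i-1}\le j<a_i$, $x_j\lessdot x_{j+1}$ if $i$ odd and $x_j\gtrdot x_{j+1}$ if $i$ even. The elements $x_{a_i}$, $i\in[t-1]$, are peaks (cover two elements, $i$ odd) or valleys (covered by two elements, $i$ even). $\mathcal J(F)$ is the set of order ideals. For $q\in F$, $I\in\mathcal J(F)$: $\hat\chi_q(I)=1$ if $q\in I$, else 0; $\chi_q(I)=1$ if $q\in\max(I)$, else 0; $T_q(I)=1$ if $q\in\min(F\setminus I)$, $-1$ if $q\in\max(I)$, $0$ otherwise. $f\equiv g$ means $f-g=\sum_{q\in F}c_qT_q$ for real constants $c_q$; real numbers denote constant functions. *)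

theory Defs
  imports Complex_Main
begin

(* A fence F(alpha_1,...,alpha_t) is given by the list alpha.
   Its elements x_1..x_n are represented by the naturals 1..n. *)

definition fence_ps :: "nat list \<Rightarrow> nat \<Rightarrow> nat" where
  "fence_ps alpha i = sum_list (take i alpha)"

definition fence_n :: "nat list \<Rightarrow> nat" where
  "fence_n alpha = sum_list alpha - 1"

definition fence_carrier :: "nat list \<Rightarrow> nat set" where
  "fence_carrier alpha = {1..fence_n alpha}"

definition fence_seg :: "nat list \<Rightarrow> nat \<Rightarrow> nat" where
  "fence_seg alpha j = (LEAST i. j < fence_ps alpha i)"

definition fence_cover :: "nat list \<Rightarrow> (nat \<times> nat) set" where
  "fence_cover alpha =
     {(j, j+1) | j. 1 \<le> j \<and> j + 1 \<le> fence_n alpha \<and> odd (fence_seg alpha j)} \<union>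
     {(j+1, j) | j. 1 \<le> j \<and> j + 1 \<le> fence_n alpha \<and> even (fence_seg alpha j)}"

definition fence_le :: "nat list \<Rightarrow> nat \<Rightarrow> nat \<Rightarrow> bool" where
  "fence_le alpha x y \<longleftrightarrow> x \<in> fence_carrier alpha \<and> y \<in> fence_carrier alpha \<and>
      (x, y) \<in> (fence_cover alpha)\<^sup>*"

definition fence_less :: "nat list \<Rightarrow> nat \<Rightarrow> nat \<Rightarrow> bool" where
  "fence_less alpha x y \<longleftrightarrow> fence_le alpha x y \<and> x \<noteq> y"

definition fence_peaks :: "nat list \<Rightarrow> nat set" where
  "fence_peaks alpha = {fence_ps alpha i | i. 1 \<le> i \<and> i \<le> length alpha - 1 \<and> odd i}"

definition fence_valleys :: "nat list \<Rightarrow> nat set" where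
  "fence_valleys alpha = {fence_ps alpha i | i. 1 \<le> i \<and> i \<le> length alpha - 1 \<and> even i}"

definition order_ideals :: "nat list \<Rightarrow> nat set set" where
  "order_ideals alpha = {I. I \<subseteq> fence_carrier alpha \<and>
      (\<forall>x y. y \<in> I \<longrightarrow> fence_le alpha x y \<longrightarrow> x \<in> I)}"

definition in_max :: "nat list \<Rightarrow> nat set \<Rightarrow> nat \<Rightarrow> bool" where
  "in_max alpha I q \<longleftrightarrow> q \<in> I \<and> \<not> (\<exists>y\<in>I. fence_less alpha q y)"

definition in_min_compl :: "nat list \<Rightarrow> nat set \<Rightarrow> nat \<Rightarrow> bool" where
  "in_min_compl alpha I q \<longleftrightarrow> q \<in> fence_carrier alpha - I \<and>
      \<not> (\<exists>y\<in>fence_carrier alpha - I. fence_less alpha y q)"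

definition chi_hat :: "nat \<Rightarrow> nat set \<Rightarrow> real" where
  "chi_hat q I = (if q \<in> I then 1 else 0)"

definition chi :: "nat list \<Rightarrow> nat \<Rightarrow> nat set \<Rightarrow> real" where
  "chi alpha q I = (if in_max alpha I q then 1 else 0)"

definition toggle :: "nat list \<Rightarrow> nat \<Rightarrow> nat set \<Rightarrow> real" where
  "toggle alpha q I = (if in_min_compl alpha I q then 1
                       else if in_max alpha I q then -1 else 0)"

definition toggle_equiv :: "nat list \<Rightarrow> (nat set \<Rightarrow> real) \<Rightarrow> (nat set \<Rightarrow> real) \<Rightarrow> bool" where
  "toggle_equiv alpha f g \<longleftrightarrow> (\<exists>c :: nat \<Rightarrow> real. \<forall>I \<in> order_ideals alpha.
      f I - g I = (\<Sum>q\<in>fence_carrier alpha. c q * toggle alpha q I))"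

end

theory Submission
  imports Defs
begin


lemma cover_carrier:
  assumes "(x,y) \<in> fence_cover alpha"
  shows "x \<in> fence_carrier alpha \<and> y \<in> fence_carrier alpha \<and> x \<noteq> y"
  using assms unfolding fence_cover_def fence_carrier_def by auto

lemma ideal_cover:
  assumes "I \<in> order_ideals alpha" "(x,y) \<in> fence_cover alpha" "y \<in> I"
  shows "x \<in> I"
  using assms cover_carrier[OF assms(2)] unfolding order_ideals_def fence_le_def by blast

lemma in_max_iff:
  assumes I: "I \<in> order_ideals alpha"
  shows "in_max alpha I q \<longleftrightarrow> q \<in> I \<and> (\<forall>y. (q,y) \<in> fence_cover alpha \<longrightarrow> y \<notin> I)"
proof
  assume h: "in_max alpha I q"
  have "q \<in> I" using h unfolding in_max_def by auto
  moreover have "y \<notin> I" if c: "(q,y) \<in> fence_cover alpha" for y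
  proof
    assume "y \<in> I"
    moreover have "fence_less alpha q y"
      using cover_carrier[OF c] c unfolding fence_less_def fence_le_def by auto
    ultimately show False using h unfolding in_max_def by auto
  qed
  ultimately show "q \<in> I \<and> (\<forall>y. (q,y) \<in> fence_cover alpha \<longrightarrow> y \<notin> I)" by auto
next
  assume h: "q \<in> I \<and> (\<forall>y. (q,y) \<in> fence_cover alpha \<longrightarrow> y \<notin> I)"
  have "\<not> fence_less alpha q y" if "y \<in> I" for y
  proof
    assume l: "fence_less alpha q y"
    then have r: "(q,y) \<in> (fence_cover alpha)\<^sup>*" "q \<noteq> y" "y \<in> fence_carrier alpha"
      unfolding fence_less_def fence_le_def by auto
    from r(1,2) obtain z where z: "(q,z) \<in> fence_cover alpha" "(z,y) \<in> (fence_cover alpha)\<^sup>*"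
      by (metis converse_rtranclE)
    have "z \<in> I" using I that z r(3) cover_carrier[OF z(1)]
      unfolding order_ideals_def fence_le_def by blast
    then show False using h z by auto
  qed
  then show "in_max alpha I q" using h unfolding in_max_def by auto
qed

lemma in_min_iff:
  assumes I: "I \<in> order_ideals alpha"
  shows "in_min_compl alpha I q \<longleftrightarrow> q \<in> fence_carrier alpha \<and> q \<notin> I \<and>
            (\<forall>y. (y,q) \<in> fence_cover alpha \<longrightarrow> y \<in> I)"
proof
  assume h: "in_min_compl alpha I q"
  have "y \<in> I" if c: "(y,q) \<in> fence_cover alpha" for y
  proof (rule ccontr)
    assume "y \<notin> I"
    moreover have "fence_less alpha y q"
      using cover_carrier[OF c] c unfolding fence_less_def fence_le_def by auto
    ultimately show False using h cover_carrier[OF c] unfolding in_min_compl_def by auto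
  qed
  then show "q \<in> fence_carrier alpha \<and> q \<notin> I \<and>
            (\<forall>y. (y,q) \<in> fence_cover alpha \<longrightarrow> y \<in> I)" using h unfolding in_min_compl_def by auto
next
  assume h: "q \<in> fence_carrier alpha \<and> q \<notin> I \<and>
            (\<forall>y. (y,q) \<in> fence_cover alpha \<longrightarrow> y \<in> I)"
  have "\<not> fence_less alpha y q" if "y \<in> fence_carrier alpha - I" for y
  proof
    assume l: "fence_less alpha y q"
    then have r: "(y,q) \<in> (fence_cover alpha)\<^sup>*" "y \<noteq> q" "y \<in> fence_carrier alpha"
      unfolding fence_less_def fence_le_def by auto
    from r(1,2) obtain z where z: "(y,z) \<in> (fence_cover alpha)\<^sup>*" "(z,q) \<in> fence_cover alpha"
      by (metis rtranclE)
    have "z \<in> I" using h z by auto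
    then have "y \<in> I" using I z r(3) cover_carrier[OF z(2)]
      unfolding order_ideals_def fence_le_def by blast
    then show False using that by auto
  qed
  then show "in_min_compl alpha I q" using h unfolding in_min_compl_def by auto
qed

lemma sbp:
  fixes c Y :: "nat \<Rightarrow> real"
  shows "(\<Sum>q=1..n. c q * (Y (q-1) - 2 * Y q + Y (q+1))) =
         (\<Sum>q=1..n. Y q * (c (q-1) - 2 * c q + c (q+1))) + c 1 * Y 0 - c 0 * Y 1
          + c n * Y (n+1) - c (n+1) * Y n"
proof (induction n)
  case 0 then show ?case by simp
next
  case (Suc n)
  show ?case using Suc by (cases n) (simp_all add: algebra_simps)
qed


lemma ps_rep: "fence_ps (replicate t a) i = min i t * a"
  unfolding fence_ps_def by (simp add: take_replicate sum_list_replicate)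

lemma n_rep: "fence_n (replicate t a) = t * a - 1"
  unfolding fence_n_def by (simp add: sum_list_replicate)

lemma seg_rep:
  assumes "a > 0" "j < t * a"
  shows "fence_seg (replicate t a) j = j div a + 1"
  unfolding fence_seg_def ps_rep
proof (rule Least_equality)
  have "j div a < t" using assms by (simp add: less_mult_imp_div_less)
  then show "j < min (j div a + 1) t * a" using assms
  proof -
    have m: "min (j div a + 1) t = j div a + 1" using \<open>j div a < t\<close> by simp
    have "j = j div a * a + j mod a" by simp
    moreover have "j mod a < a" using assms by simp
    moreover have "(j div a + 1) * a = j div a * a + a" by simp
    ultimately show ?thesis unfolding m by linarith
  qed
next
  fix y assume "j < min y t * a"
  then have "j < y * a" using mult_le_mono1[OF min.cobounded1, of y t a] by linarith
  then show "j div a + 1 \<le> y" using assms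
    by (simp add: div_less_iff_less_mult Suc_leI)
qed

lemma cover_rep:
  assumes "a > 0"
  shows "(x,y) \<in> fence_cover (replicate t a) \<longleftrightarrow>
    (y = x + 1 \<and> 1 \<le> x \<and> x + 1 \<le> t*a - 1 \<and> even (x div a)) \<or>
    (x = y + 1 \<and> 1 \<le> y \<and> y + 1 \<le> t*a - 1 \<and> odd (y div a))"
proof -
  have s: "fence_seg (replicate t a) j = j div a + 1" if "j + 1 \<le> t*a - 1" for j
    using seg_rep[OF assms] that by auto
  show ?thesis
  proof
    assume "(x,y) \<in> fence_cover (replicate t a)"
    then show "(y = x + 1 \<and> 1 \<le> x \<and> x + 1 \<le> t*a - 1 \<and> even (x div a)) \<or>
    (x = y + 1 \<and> 1 \<le> y \<and> y + 1 \<le> t*a - 1 \<and> odd (y div a))"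
      unfolding fence_cover_def n_rep
      apply (elim UnE CollectE exE conjE)
       apply (simp add: s)
      apply (simp add: s)
      done
  next
    assume "(y = x + 1 \<and> 1 \<le> x \<and> x + 1 \<le> t*a - 1 \<and> even (x div a)) \<or>
    (x = y + 1 \<and> 1 \<le> y \<and> y + 1 \<le> t*a - 1 \<and> odd (y div a))"
    then show "(x,y) \<in> fence_cover (replicate t a)"
      unfolding fence_cover_def n_rep
      apply (elim disjE conjE)
       apply (rule UnI1) apply (simp add: s)
      apply (rule UnI2) apply (simp add: s)
      done
  qed
qed


lemma carrier_rep: "fence_carrier (replicate t a) = {1..t*a-1}"
  unfolding fence_carrier_def n_rep by simp

lemma ideal_sub: "I \<in> order_ideals alpha \<Longrightarrow> I \<subseteq> fence_carrier alpha"
  unfolding order_ideals_def by auto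

lemma in_max2:
  assumes "a > 0" "I \<in> order_ideals (replicate t a)"
  shows "in_max (replicate t a) I q \<longleftrightarrow> q \<in> I \<and>
     (q + 1 \<le> t*a-1 \<and> 1 \<le> q \<and> even (q div a) \<longrightarrow> q + 1 \<notin> I) \<and>
     (2 \<le> q \<and> odd ((q-1) div a) \<longrightarrow> q - 1 \<notin> I)"
proof -
  have sub: "I \<subseteq> {1..t*a-1}" using ideal_sub[OF assms(2)] carrier_rep by metis
  show ?thesis unfolding in_max_iff[OF assms(2)] cover_rep[OF assms(1)]
  proof (intro iffI conjI impI)
    assume h: "q \<in> I \<and> (\<forall>y. (y = q + 1 \<and> 1 \<le> q \<and> q + 1 \<le> t * a - 1 \<and> even (q div a) \<or>
            q = y + 1 \<and> 1 \<le> y \<and> y + 1 \<le> t * a - 1 \<and> odd (y div a)) \<longrightarrow> y \<notin> I)"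
    then show "q \<in> I" by auto
    show "q + 1 \<notin> I" if "q + 1 \<le> t*a-1 \<and> 1 \<le> q \<and> even (q div a)" using h that by auto
    show "q - 1 \<notin> I" if "2 \<le> q \<and> odd ((q-1) div a)"
    proof -
      have "q \<le> t*a-1" using h sub by auto
      then have "q = (q-1) + 1 \<and> 1 \<le> q-1 \<and> (q-1) + 1 \<le> t * a - 1 \<and> odd ((q-1) div a)"
        using that by auto
      then show ?thesis using h[THEN conjunct2, rule_format, of "q-1"] by blast
    qed
  next
    assume h: "q \<in> I \<and>
     (q + 1 \<le> t*a-1 \<and> 1 \<le> q \<and> even (q div a) \<longrightarrow> q + 1 \<notin> I) \<and>
     (2 \<le> q \<and> odd ((q-1) div a) \<longrightarrow> q - 1 \<notin> I)"
    then show "q \<in> I" by auto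
    show "\<forall>y. (y = q + 1 \<and> 1 \<le> q \<and> q + 1 \<le> t * a - 1 \<and> even (q div a) \<or>
            q = y + 1 \<and> 1 \<le> y \<and> y + 1 \<le> t * a - 1 \<and> odd (y div a)) \<longrightarrow> y \<notin> I"
    proof (intro allI impI)
      fix y assume "y = q + 1 \<and> 1 \<le> q \<and> q + 1 \<le> t * a - 1 \<and> even (q div a) \<or>
            q = y + 1 \<and> 1 \<le> y \<and> y + 1 \<le> t * a - 1 \<and> odd (y div a)"
      then show "y \<notin> I"
      proof
        assume "q = y + 1 \<and> 1 \<le> y \<and> y + 1 \<le> t * a - 1 \<and> odd (y div a)"
        then have "y = q - 1" "2 \<le> q" "odd ((q-1) div a)" by auto
        then show ?thesis using h by auto
      qed (use h in auto)
    qed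
  qed
qed

lemma in_min2:
  assumes "a > 0" "I \<in> order_ideals (replicate t a)"
  shows "in_min_compl (replicate t a) I q \<longleftrightarrow> 1 \<le> q \<and> q \<le> t*a-1 \<and> q \<notin> I \<and>
     (2 \<le> q \<and> even ((q-1) div a) \<longrightarrow> q - 1 \<in> I) \<and>
     (q + 1 \<le> t*a-1 \<and> odd (q div a) \<longrightarrow> q + 1 \<in> I)"
  unfolding in_min_iff[OF assms(2)] carrier_rep
proof (intro iffI conjI impI)
  assume h: "q \<in> {1..t * a - 1} \<and> q \<notin> I \<and> (\<forall>y. (y, q) \<in> fence_cover (replicate t a) \<longrightarrow> y \<in> I)"
  show "1 \<le> q" "q \<le> t*a-1" "q \<notin> I" using h by auto
  show "q - 1 \<in> I" if "2 \<le> q \<and> even ((q-1) div a)"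
  proof -
    have "(q-1, q) \<in> fence_cover (replicate t a)" unfolding cover_rep[OF assms(1)]
      using that h by auto
    then show ?thesis using h by auto
  qed
  show "q + 1 \<in> I" if "q + 1 \<le> t*a-1 \<and> odd (q div a)"
  proof -
    have "(q+1, q) \<in> fence_cover (replicate t a)" unfolding cover_rep[OF assms(1)]
      using that h by auto
    then show ?thesis using h by auto
  qed
next
  assume h: "1 \<le> q \<and> q \<le> t*a-1 \<and> q \<notin> I \<and>
     (2 \<le> q \<and> even ((q-1) div a) \<longrightarrow> q - 1 \<in> I) \<and>
     (q + 1 \<le> t*a-1 \<and> odd (q div a) \<longrightarrow> q + 1 \<in> I)"
  then show "q \<in> {1..t * a - 1}" "q \<notin> I" by auto
  show "\<forall>y. (y, q) \<in> fence_cover (replicate t a) \<longrightarrow> y \<in> I"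
  proof (intro allI impI)
    fix y assume "(y, q) \<in> fence_cover (replicate t a)"
    then have "(q = y + 1 \<and> 1 \<le> y \<and> y + 1 \<le> t * a - 1 \<and> even (y div a)) \<or>
      (y = q + 1 \<and> 1 \<le> q \<and> q + 1 \<le> t * a - 1 \<and> odd (q div a))"
      unfolding cover_rep[OF assms(1)] by auto
    then show "y \<in> I"
    proof
      assume "q = y + 1 \<and> 1 \<le> y \<and> y + 1 \<le> t * a - 1 \<and> even (y div a)"
      then have "y = q - 1" "2 \<le> q" "even ((q-1) div a)" by auto
      then show ?thesis using h by auto
    qed (use h in auto)
  qed
qed

lemma ideal_cl:
  assumes "a > 0" "I \<in> order_ideals (replicate t a)"
  shows "q + 1 \<in> I \<Longrightarrow> 1 \<le> q \<Longrightarrow> even (q div a) \<Longrightarrow> q \<in> I"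
    and "q \<in> I \<Longrightarrow> 1 \<le> q \<Longrightarrow> q + 1 \<le> t*a-1 \<Longrightarrow> odd (q div a) \<Longrightarrow> q + 1 \<in> I"
proof -
  have sub: "I \<subseteq> {1..t*a-1}" using ideal_sub[OF assms(2)] carrier_rep by metis
  show "q \<in> I" if "q + 1 \<in> I" "1 \<le> q" "even (q div a)"
  proof -
    have "(q, q+1) \<in> fence_cover (replicate t a)" unfolding cover_rep[OF assms(1)]
      using that sub by auto
    then show ?thesis using ideal_cover[OF assms(2)] that by blast
  qed
  show "q + 1 \<in> I" if "q \<in> I" "1 \<le> q" "q + 1 \<le> t*a-1" "odd (q div a)"
  proof -
    have "(q+1, q) \<in> fence_cover (replicate t a)" unfolding cover_rep[OF assms(1)]
      using that by auto
    then show ?thesis using ideal_cover[OF assms(2)] that by blast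
  qed
qed

definition Yf :: "nat set \<Rightarrow> nat \<Rightarrow> real" where
  "Yf I j = (if j = 0 then 1 else if j \<in> I then 1 else 0)"

lemma div_pred: "q mod a \<noteq> 0 \<Longrightarrow> (q - 1) div a = q div (a::nat)"
proof -
  assume h: "q mod a \<noteq> 0"
  then have "q \<noteq> 0" by (cases "q = 0") auto
  then obtain m where m: "q = Suc m" by (cases q) auto
  show ?thesis using h unfolding m by (simp add: div_Suc)
qed

lemma toggle_ord:
  assumes a: "a > 0" and I: "I \<in> order_ideals (replicate t a)" and t: "odd t"
    and q: "1 \<le> q" "q \<le> t*a-1" "q mod a \<noteq> 0"
  shows "toggle (replicate t a) q I = Yf I (q-1) - 2 * Yf I q + Yf I (q+1)"
proof -
  have sub: "I \<subseteq> {1..t*a-1}" using ideal_sub[OF I] carrier_rep by metis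
  have d: "(q-1) div a = q div a" using div_pred q(3) by blast
  show ?thesis
  proof (cases "even (q div a)")
    case True
    have mx: "in_max (replicate t a) I q \<longleftrightarrow> q \<in> I \<and> q + 1 \<notin> I"
      unfolding in_max2[OF a I] d using True q sub by auto
    have mn: "in_min_compl (replicate t a) I q \<longleftrightarrow> q \<notin> I \<and> (2 \<le> q \<longrightarrow> q - 1 \<in> I)"
      unfolding in_min2[OF a I] d using True q by auto
    have c1: "q + 1 \<in> I \<Longrightarrow> q \<in> I" using ideal_cl(1)[OF a I, of q] True q by auto
    have c2: "q \<in> I \<Longrightarrow> 2 \<le> q \<Longrightarrow> q - 1 \<in> I"
      using ideal_cl(1)[OF a I, of "q-1"] True q d by auto
    show ?thesis unfolding toggle_def mx mn Yf_def using c1 c2 q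
      by (cases "q = 1") auto
  next
    case False
    have a2: "a \<ge> 2" using q(3) a by (cases "a = 1") auto
    have qa: "q div a \<ge> 1" using False by (cases "q div a = 0") auto
    have "q div a * a \<le> q" by simp
    moreover have "1 * a \<le> q div a * a" using qa by (rule mult_le_mono1)
    ultimately have "a \<le> q" by linarith
    then have q2: "2 \<le> q" using a2 by auto
    have "q div a < t" using q a by (simp add: less_mult_imp_div_less)
    moreover have "q div a \<noteq> t - 1"
    proof
      assume e: "q div a = t - 1"
      have "even (t - 1)" using t by presburger
      then show False using False e by simp
    qed
    ultimately have "q div a + 2 \<le> t" by arith
    then have "(q div a + 2) * a \<le> t * a" by (rule mult_le_mono1)
    moreover have "q < (q div a + 1) * a"
    proof -
      have "q = q div a * a + q mod a" by simp
      moreover have "q mod a < a" using a by simp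
      moreover have "(q div a + 1) * a = q div a * a + a" by simp
      ultimately show ?thesis by linarith
    qed
    ultimately have qN: "q + 1 \<le> t*a-1" using a2 by (simp add: algebra_simps)
    have mx: "in_max (replicate t a) I q \<longleftrightarrow> q \<in> I \<and> (2 \<le> q \<longrightarrow> q - 1 \<notin> I)"
      unfolding in_max2[OF a I] d using False q sub by auto
    have mn: "in_min_compl (replicate t a) I q \<longleftrightarrow> q \<notin> I \<and> (q + 1 \<le> t*a-1 \<longrightarrow> q + 1 \<in> I)"
      unfolding in_min2[OF a I] d using False q by auto
    have c1: "q \<in> I \<Longrightarrow> q + 1 \<le> t*a-1 \<Longrightarrow> q + 1 \<in> I" using ideal_cl(2)[OF a I, of q] False q by auto
    have c2: "q - 1 \<in> I \<Longrightarrow> 2 \<le> q \<Longrightarrow> q \<in> I"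
      using ideal_cl(2)[OF a I, of "q-1"] False q d by auto
    have c3: "q + 1 \<notin> I" if "\<not> q + 1 \<le> t*a-1" using sub that by auto
    show ?thesis unfolding toggle_def mx mn Yf_def using c1 c2 c3 q q2 qN
      by auto
  qed
qed

lemma predmul_div: "0 < a \<Longrightarrow> 1 \<le> k \<Longrightarrow> (k*a - 1) div a = k - (1::nat)"
proof -
  assume a: "0 < a" and k: "1 \<le> k"
  then obtain j where j: "k = Suc j" by (cases k) auto
  have e: "k*a - 1 = (a - 1) + j * a" using a unfolding j by (simp add: algebra_simps)
  have d1: "((a - 1) + j * a) div a = j + (a - 1) div a" using div_mult_self1[of a "a-1" j] a by linarith
  have d2: "(a - 1) div a = 0" using a by (intro div_less) simp
  have "(k*a - 1) div a = j" by (subst e, subst d1, subst d2, simp)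
  then show ?thesis using j by simp
qed

lemma peak_chi:
  assumes a: "a > 0" and I: "I \<in> order_ideals (replicate t a)"
    and k: "1 \<le> k" "odd k"
  shows "chi (replicate t a) (k*a) I = Yf I (k*a)"
proof -
  have "k*a \<noteq> 0" using a k by auto
  moreover have "(k*a) div a = k" using a by simp
  moreover have "(k*a - 1) div a = k - 1" using predmul_div a k by blast
  moreover have "even (k - 1)" using k by presburger
  ultimately show ?thesis unfolding chi_def Yf_def in_max2[OF a I] using k by auto
qed

lemma valley_toggle:
  assumes a: "a > 0" and I: "I \<in> order_ideals (replicate t a)"
    and k: "1 \<le> k" "even k" "k \<le> t - 1"
  shows "toggle (replicate t a) (k*a) I = 1 - Yf I (k*a) - chi (replicate t a) (k*a) I"
proof -
  have "k*a \<noteq> 0" using a k by auto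
  moreover have "(k*a) div a = k" using a by simp
  moreover have "(k*a - 1) div a = k - 1" using predmul_div a k by blast
  moreover have "odd (k - 1)" using k by presburger
  moreover have "1 \<le> k * a" using a k by simp
  moreover have "k * a \<le> t*a-1"
  proof -
    have "k * a \<le> (t-1)*a" using k by (simp add: mult_le_mono1)
    moreover have "(t-1)*a + 1 \<le> t*a" using a k by (cases t) auto
    ultimately show ?thesis by linarith
  qed
  ultimately have mn: "in_min_compl (replicate t a) I (k*a) \<longleftrightarrow> k*a \<notin> I"
    unfolding in_min2[OF a I] using k by auto
  have mx: "in_max (replicate t a) I (k*a) \<Longrightarrow> k*a \<in> I" unfolding in_max_def by blast
  have nz: "k*a \<noteq> 0" using a k by auto
  show ?thesis unfolding toggle_def chi_def Yf_def using mn mx nz by (cases "k*a \<in> I") auto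
qed

definition cc :: "nat \<Rightarrow> nat \<Rightarrow> real" where
  "cc a q = real (q mod a) * (real (q mod a) - real a) / 2"

lemma cc_diff:
  assumes a: "a \<ge> 2" and q: "1 \<le> q"
  shows "cc a (q-1) - 2 * cc a q + cc a (q+1) = (if q mod a = 0 then 1 - real a else 1)"
proof -
  obtain m where m: "q = Suc m" using q by (cases q) auto
  have qm: "q - 1 = m" using m by simp
  have s: "m mod a < a" using a by simp
  have ms: "Suc m mod a = (if Suc (m mod a) = a then 0 else Suc (m mod a))" by (rule mod_Suc)
  show ?thesis
  proof (cases "Suc (m mod a) = a")
    case True
    have r: "q mod a = 0" using ms True m by simp
    have r1: "(q+1) mod a = 1" using r a mod_Suc[of q a] by simp
    have rm: "real (m mod a) = real a - 1" using arg_cong[OF True, of real] by simp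
    have e1: "cc a (q-1) = (real a - 1) * (- 1) / 2" unfolding cc_def qm rm by simp
    have e2: "cc a q = 0" unfolding cc_def r by simp
    have e3: "cc a (q+1) = (1 - real a) / 2" unfolding cc_def r1 by simp
    show ?thesis unfolding e1 e2 e3 using r by (simp add: field_simps)
  next
    case False
    have r: "q mod a = Suc (m mod a)" using ms False m by simp
    have r1: "(q+1) mod a = (if Suc (Suc (m mod a)) = a then 0 else Suc (Suc (m mod a)))"
      using r mod_Suc[of q a] by simp
    define x where "x = real (m mod a)"
    have e1: "cc a (q-1) = x * (x - real a) / 2" unfolding cc_def qm x_def by simp
    have e2: "cc a q = (x + 1) * (x + 1 - real a) / 2" unfolding cc_def r x_def by (simp add: algebra_simps)
    have nz: "q mod a \<noteq> 0" using r by simp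
    show ?thesis
    proof (cases "Suc (Suc (m mod a)) = a")
      case True
      have ra: "real a = x + 2" unfolding x_def using arg_cong[OF True, of real] by simp
      have e3: "cc a (q+1) = 0" unfolding cc_def using r1 True by simp
      show ?thesis unfolding e1 e2 e3 ra using nz by (simp add: field_simps)
    next
      case False
      have e3: "cc a (q+1) = (x + 2) * (x + 2 - real a) / 2" unfolding cc_def x_def using r1 False by (simp add: algebra_simps)
      show ?thesis unfolding e1 e2 e3 using nz by (simp add: field_simps)
    qed
  qed
qed



lemma peaks_rep: "fence_peaks (replicate t a) = (\<lambda>k. k*a) ` {k. 1 \<le> k \<and> k \<le> t-1 \<and> odd k}"
proof (rule set_eqI, rule iffI)
  fix x assume "x \<in> fence_peaks (replicate t a)"
  then obtain i where i: "x = min i t * a" "1 \<le> i" "i \<le> t - 1" "odd i"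
    unfolding fence_peaks_def ps_rep length_replicate by blast
  have "min i t = i" using i(3) by simp
  then have "x = i * a" using i(1) by simp
  moreover have "i \<in> {k. 1 \<le> k \<and> k \<le> t-1 \<and> odd k}" using i by blast
  ultimately show "x \<in> (\<lambda>k. k*a) ` {k. 1 \<le> k \<and> k \<le> t-1 \<and> odd k}" by (rule image_eqI)
next
  fix x assume "x \<in> (\<lambda>k. k*a) ` {k. 1 \<le> k \<and> k \<le> t-1 \<and> odd k}"
  then obtain i where i: "x = i * a" "1 \<le> i" "i \<le> t - 1" "odd i" by blast
  have "min i t = i" using i(3) by simp
  then have "x = min i t * a" using i by simp
  then show "x \<in> fence_peaks (replicate t a)" unfolding fence_peaks_def ps_rep length_replicate using i by blast
qed

lemma valleys_rep: "fence_valleys (replicate t a) = (\<lambda>k. k*a) ` {k. 1 \<le> k \<and> k \<le> t-1 \<and> even k}"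
proof (rule set_eqI, rule iffI)
  fix x assume "x \<in> fence_valleys (replicate t a)"
  then obtain i where i: "x = min i t * a" "1 \<le> i" "i \<le> t - 1" "even i"
    unfolding fence_valleys_def ps_rep length_replicate by blast
  have "min i t = i" using i(3) by simp
  then have "x = i * a" using i(1) by simp
  moreover have "i \<in> {k. 1 \<le> k \<and> k \<le> t-1 \<and> even k}" using i by blast
  ultimately show "x \<in> (\<lambda>k. k*a) ` {k. 1 \<le> k \<and> k \<le> t-1 \<and> even k}" by (rule image_eqI)
next
  fix x assume "x \<in> (\<lambda>k. k*a) ` {k. 1 \<le> k \<and> k \<le> t-1 \<and> even k}"
  then obtain i where i: "x = i * a" "1 \<le> i" "i \<le> t - 1" "even i" by blast
  have "min i t = i" using i(3) by simp
  then have "x = min i t * a" using i by simp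
  then show "x \<in> fence_valleys (replicate t a)" unfolding fence_valleys_def ps_rep length_replicate using i by blast
qed

lemma S_rep:
  fixes a t :: nat
  assumes a: "a > 0" and t: "t \<ge> 1"
  shows "{q \<in> {1..t*a-1}. q mod a = 0} = (\<lambda>k. k*a) ` {1..t-1}"
proof
  show "(\<lambda>k. k*a) ` {1..t-1} \<subseteq> {q \<in> {1..t*a-1}. q mod a = 0}"
  proof
    fix q assume "q \<in> (\<lambda>k. k*a) ` {1..t-1}"
    then obtain k where k: "q = k*a" "1 \<le> k" "k \<le> t-1" by (auto simp only: image_iff atLeastAtMost_iff)
    have "k * a \<le> (t-1)*a" using mult_le_mono1[OF k(3), of a] by simp
    moreover have "(t-1)*a + 1 \<le> t*a" using a t by (cases t) auto
    ultimately have "k*a \<le> t*a - 1" by linarith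
    moreover have "1 \<le> k*a" using k a by simp
    ultimately show "q \<in> {q \<in> {1..t*a-1}. q mod a = 0}" using k by simp
  qed
next
  show "{q \<in> {1..t*a-1}. q mod a = 0} \<subseteq> (\<lambda>k. k*a) ` {1..t-1}"
  proof
    fix q assume q: "q \<in> {q \<in> {1..t*a-1}. q mod a = 0}"
    have qm: "q mod a = 0" "1 \<le> q" using q by auto
    have e: "q = q div a * a" using div_mult_mod_eq[of q a] qm by simp
    have "q div a \<noteq> 0"
    proof
      assume "q div a = 0"
      then have "q = 0" using e by simp
      then show False using qm by simp
    qed
    moreover have "q div a < t"
    proof -
      have "q < t * a" using qm q by auto
      then show ?thesis using a by (simp add: less_mult_imp_div_less)
    qed
    ultimately have "q div a \<in> {1..t-1}" by auto
    then show "q \<in> (\<lambda>k. k*a) ` {1..t-1}" using e by blast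
  qed
qed

lemma card_evens: "card {k::nat. 1 \<le> k \<and> k \<le> t-1 \<and> even k} = (t-1) div 2"
proof -
  have E: "{k::nat. 1 \<le> k \<and> k \<le> t-1 \<and> even k} = (\<lambda>m. 2*m) ` {1..(t-1) div 2}"
  proof (rule set_eqI, rule iffI)
    fix k assume "k \<in> {k::nat. 1 \<le> k \<and> k \<le> t-1 \<and> even k}"
    then have k: "1 \<le> k" "k \<le> t-1" "even k" by simp_all
    have "k = 2 * (k div 2)" using k(3) by simp
    moreover have "k div 2 \<in> {1..(t-1) div 2}" unfolding atLeastAtMost_iff using k by presburger
    ultimately show "k \<in> (\<lambda>m. 2*m) ` {1..(t-1) div 2}" by blast
  next
    fix k assume "k \<in> (\<lambda>m. 2*m) ` {1..(t-1) div 2}"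
    then obtain m where m: "k = 2*m" "1 \<le> m" "m \<le> (t-1) div 2" by (auto simp del: atLeastAtMost_iff) (simp add: atLeastAtMost_iff)
    then have "1 \<le> k" "k \<le> t-1" "even k" by presburger+
    then show "k \<in> {k::nat. 1 \<le> k \<and> k \<le> t-1 \<and> even k}" by simp
  qed
  have "inj_on (\<lambda>m::nat. 2*m) {1..(t-1) div 2}" by (auto simp: inj_on_def)
  then have "card ((\<lambda>m::nat. 2*m) ` {1..(t-1) div 2}) = (t-1) div 2" by (subst card_image) auto
  then show ?thesis unfolding E .
qed



theorem theorem5p3:
  fixes a t :: nat
  assumes "a \<ge> 2" and "t \<ge> 3" and "odd t"
  defines "alpha \<equiv> replicate t a"
  shows "toggle_equiv alpha
           (\<lambda>I. \<Sum>q\<in>fence_carrier alpha. chi_hat q I)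
           (\<lambda>I. real (fence_n alpha) / 2 +
                 real a * ((\<Sum>p\<in>fence_peaks alpha. chi alpha p I)
                           - (\<Sum>v\<in>fence_valleys alpha. chi alpha v I)))"
proof -
  have a2: "a \<ge> 2" and t3: "t \<ge> 3" and tod: "odd t" using assms by auto
  have a0: "a > 0" using a2 by simp
  define N where "N = t*a - 1"
  define P where "P = fence_peaks (replicate t a)"
  define V where "V = fence_valleys (replicate t a)"
  have ta: "t * a \<ge> 1" using a0 t3 by simp
  have car: "fence_carrier (replicate t a) = {1..N}" by (simp add: carrier_rep N_def)
  have nN: "fence_n (replicate t a) = N" by (simp add: n_rep N_def)
  have Pr: "P = (\<lambda>k. k*a) ` {k. 1 \<le> k \<and> k \<le> t-1 \<and> odd k}" unfolding P_def by (rule peaks_rep)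
  have Vr: "V = (\<lambda>k. k*a) ` {k. 1 \<le> k \<and> k \<le> t-1 \<and> even k}" unfolding V_def by (rule valleys_rep)
  have split: "{1..t-1} = {k. 1 \<le> k \<and> k \<le> t-1 \<and> odd k} \<union> {k. 1 \<le> k \<and> k \<le> t-1 \<and> even k}"
    by auto
  have S: "{q \<in> {1..N}. q mod a = 0} = P \<union> V"
  proof -
    have "{q \<in> {1..N}. q mod a = 0} = (\<lambda>k. k*a) ` {1..t-1}" unfolding N_def
      by (rule S_rep[OF a0]) (use t3 in simp)
    also have "\<dots> = P \<union> V" unfolding Pr Vr by (subst split) (rule image_Un)
    finally show ?thesis .
  qed
  have inj: "inj (\<lambda>k::nat. k*a)" using a0 by (auto simp: inj_def)
  have disj: "P \<inter> V = {}"
  proof -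
    have "{k. 1 \<le> k \<and> k \<le> t-1 \<and> odd k} \<inter> {k. 1 \<le> k \<and> k \<le> t-1 \<and> even k} = {}" by auto
    then show ?thesis unfolding Pr Vr using inj by (simp add: image_Int[symmetric])
  qed
  have finPV: "finite (P \<union> V)" unfolding S[symmetric] by simp
  then have finP: "finite P" and finV: "finite V" by auto
  have VN: "V \<subseteq> {1..N}" using S by blast
  have PN: "P \<subseteq> {1..N}" using S by blast
  have cardV: "card V = (t-1) div 2"
    unfolding Vr card_evens[symmetric] by (rule card_image) (use inj in \<open>auto simp: inj_on_def\<close>)
  have cardVr: "real (card V) = (real t - 1) / 2"
  proof -
    obtain m where m: "t = 2*m+1" using tod by (auto elim: oddE)
    then show ?thesis unfolding cardV by simp
  qed
  have Nr: "real N = real t * real a - 1" unfolding N_def using ta by (simp add: of_nat_diff)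
  define c where "c q = cc a q - (if q \<in> V then real a else 0)" for q
  show ?thesis unfolding toggle_equiv_def alpha_def
  proof (intro exI[of _ c] ballI)
    fix I assume I: "I \<in> order_ideals (replicate t a)"
    let ?al = "replicate t a"
    let ?T = "\<lambda>q. toggle ?al q I"
    have sub: "I \<subseteq> {1..N}" using ideal_sub[OF I] car by simp
    have h1: "(\<Sum>q\<in>fence_carrier ?al. chi_hat q I) = (\<Sum>q=1..N. Yf I q)"
      unfolding car by (rule sum.cong) (auto simp: chi_hat_def Yf_def)
    have h2a: "(\<Sum>q\<in>{1..N}. c q * ?T q) =
        (\<Sum>q\<in>{1..N}. cc a q * ?T q - (if q \<in> V then real a * ?T q else 0))"
      by (rule sum.cong) (auto simp: c_def algebra_simps)
    have h2b: "(\<Sum>q\<in>{1..N}. (if q \<in> V then real a * ?T q else 0)) = (\<Sum>q\<in>V. real a * ?T q)"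
    proof -
      have "(\<Sum>q\<in>{1..N}. (if q \<in> V then real a * ?T q else 0)) = (\<Sum>q\<in>{1..N} \<inter> V. real a * ?T q)"
        by (rule sum.inter_restrict[symmetric]) simp
      also have "{1..N} \<inter> V = V" using VN by blast
      finally show ?thesis .
    qed
    have h2: "(\<Sum>q\<in>fence_carrier ?al. c q * ?T q) =
        (\<Sum>q=1..N. cc a q * ?T q) - real a * (\<Sum>q\<in>V. ?T q)"
      unfolding car h2a sum_subtractf h2b sum_distrib_left ..
    have h3: "(\<Sum>q=1..N. cc a q * ?T q) = (\<Sum>q=1..N. cc a q * (Yf I (q-1) - 2 * Yf I q + Yf I (q+1)))"
    proof (rule sum.cong)
      fix q assume q: "q \<in> {1..N}"
      show "cc a q * ?T q = cc a q * (Yf I (q-1) - 2 * Yf I q + Yf I (q+1))"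
      proof (cases "q mod a = 0")
        case True then show ?thesis by (simp add: cc_def)
      next
        case False
        have "?T q = Yf I (q-1) - 2 * Yf I q + Yf I (q+1)"
          using toggle_ord[OF a0 I tod, of q] q False unfolding N_def by auto
        then show ?thesis by simp
      qed
    qed simp
    have cc0: "cc a 0 = 0" by (simp add: cc_def)
    have ccN: "cc a (N+1) = 0" unfolding N_def cc_def using ta by simp
    have ccone: "cc a 1 = (1 - real a) / 2" unfolding cc_def using a2 by simp
    have Y0: "Yf I 0 = 1" by (simp add: Yf_def)
    have YN: "Yf I (N+1) = 0" using sub by (auto simp: Yf_def)
    have h4: "(\<Sum>q=1..N. cc a q * (Yf I (q-1) - 2 * Yf I q + Yf I (q+1))) =
       (\<Sum>q=1..N. Yf I q * (cc a (q-1) - 2 * cc a q + cc a (q+1))) + (1 - real a) / 2"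
      using sbp[of "cc a" "Yf I" N] cc0 ccN ccone Y0 YN by simp
    have h5a: "(\<Sum>q=1..N. Yf I q * (cc a (q-1) - 2 * cc a q + cc a (q+1))) =
       (\<Sum>q=1..N. Yf I q - (if q mod a = 0 then real a * Yf I q else 0))"
    proof (rule sum.cong)
      fix q assume q: "q \<in> {1..N}"
      show "Yf I q * (cc a (q-1) - 2 * cc a q + cc a (q+1)) = Yf I q - (if q mod a = 0 then real a * Yf I q else 0)"
        using cc_diff[OF a2, of q] q by (simp add: algebra_simps)
    qed simp
    have h5b: "(\<Sum>q\<in>{1..N}. (if q mod a = 0 then real a * Yf I q else 0)) = (\<Sum>q\<in>P \<union> V. real a * Yf I q)"
      unfolding S[symmetric] by (rule sum.inter_filter[symmetric]) simp
    have h5c: "(\<Sum>q\<in>P \<union> V. real a * Yf I q) = real a * (\<Sum>q\<in>P. Yf I q) + real a * (\<Sum>q\<in>V. Yf I q)"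
      unfolding sum.union_disjoint[OF finP finV disj] sum_distrib_left ..
    have h5: "(\<Sum>q=1..N. Yf I q * (cc a (q-1) - 2 * cc a q + cc a (q+1))) =
       (\<Sum>q=1..N. Yf I q) - real a * (\<Sum>q\<in>P. Yf I q) - real a * (\<Sum>q\<in>V. Yf I q)"
      unfolding h5a sum_subtractf h5b h5c by simp
    have h6a: "(\<Sum>q\<in>V. ?T q) = (\<Sum>q\<in>V. 1 - Yf I q - chi ?al q I)"
    proof (rule sum.cong)
      fix q assume "q \<in> V"
      then obtain k where k: "q = k*a" "1 \<le> k" "k \<le> t-1" "even k" unfolding Vr by blast
      show "?T q = 1 - Yf I q - chi ?al q I" unfolding k(1) by (rule valley_toggle[OF a0 I k(2,4,3)])
    qed simp
    have h6: "(\<Sum>q\<in>V. ?T q) = real (card V) - (\<Sum>q\<in>V. Yf I q) - (\<Sum>q\<in>V. chi ?al q I)"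
      unfolding h6a sum_subtractf by simp
    have h7: "(\<Sum>q\<in>P. chi ?al q I) = (\<Sum>q\<in>P. Yf I q)"
    proof (rule sum.cong)
      fix q assume "q \<in> P"
      then obtain k where k: "q = k*a" "1 \<le> k" "k \<le> t-1" "odd k" unfolding Pr by blast
      show "chi ?al q I = Yf I q" unfolding k(1) by (rule peak_chi[OF a0 I k(2,4)])
    qed simp
    show "(\<Sum>q\<in>fence_carrier ?al. chi_hat q I) -
         (real (fence_n ?al) / 2 +
          real a * ((\<Sum>p\<in>fence_peaks ?al. chi ?al p I) - (\<Sum>v\<in>fence_valleys ?al. chi ?al v I))) =
         (\<Sum>q\<in>fence_carrier ?al. c q * ?T q)"
      unfolding h2 h3 h4 h5 h6 h1 nN P_def[symmetric] V_def[symmetric] h7 Nr cardVr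
      by (simp add: algebra_simps) (simp add: field_simps)
  qed
qed

end
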